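(* Let $U$ be a real separable Hilbert space, $Q\in\mathscr L_1^+(U)$, $(W^Q(t))_{t\in\mathbb{R}}$ a two-sided $Q$-Wiener process, and $\gamma\in(\tfrac12,\tfrac32)$. For $\varepsilon\in(0,\infty)$ let \[ Z^\varepsilon_\gamma(t):=\frac1{\Gamma(\gamma)}\int_{-\infty}^t(t-s)^{\gamma-1}e^{-\varepsilon(t-s)}\,dW^Q(s),\qquad \overline Z^\varepsilon_\gamma(t):=\frac{\Gamma(\gamma)}{C_{\gamma-\frac12}}\bigl(Z^\varepsilon_\gamma(t)-Z^\varepsilon_\gamma(0)\bigr),\qquad t\in\mathbb{R}. \] Then, with $\widehat W^Q_H$ as in the context and $H=\gamma-\frac12$, for every $T\in(0,\infty)$, \[ \lim_{\varepsilon\downarrow0}\sup_{t\in[-T,T]}\bigl\|\widehat W^Q_{\gamma-\frac12}(t)-\overline Z^\varepsilon_\gamma(t)\bigr\|_{L^2(\Omega;U)}=0. \]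
   Context: $\mathscr L_1^+(U)$: self-adjoint trace-class operators $T$ on $U$ with $\langle Tx,x\rangle_U\ge\theta\|x\|^2_U$ for some $\theta>0$. Two-sided $Q$-Wiener process: $W^Q(t)=W^Q_1(t)$ for $t\ge0$, $W^Q(t)=W_2^Q(-t)$ for $t<0$ with $W_1^Q,W_2^Q$ independent standard $Q$-Wiener processes; for deterministic integrands $\Phi$ with $\Phi Q^{1/2}\in L^2(\mathbb{R};\mathscr L_2(U))$ the stochastic integral over $\mathbb{R}$ is defined and satisfies the Itô isometry $\mathbb{E}\|\int_\mathbb{R}\Phi\,dW^Q\|_U^2=\int_\mathbb{R}\|\Phi(t)Q^{1/2}\|^2_{\mathscr L_2(U)}dt$; $\int_a^b:=\int_{\mathbb{R}}\mathbf 1_{(a,b]}\cdots$. For $H\in(0,1)$, $C_H:=\int_\mathbb{R}\bigl|(1-r)_+^{H-\frac12}-(-r)_+^{H-\frac12}\bigr|^2dr$ (with $x_+^{a}:=x^{a}$ for $x>0$ and $0$ otherwise), $K_H(t,r):=\bigl((t-r)_+^{H-\frac12}-(-r)_+^{H-\frac12}\bigr)/C_H$, and $\widehat W^Q_H(t):=\int_\mathbb{R}K_H(t,r)\,dW^Q(r)$, $t\in\mathbb{R}$. *)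

theory Defs
  imports "HOL-Probability.Probability"
begin

definition pospow :: "real \<Rightarrow> real \<Rightarrow> real" where
  "pospow x a = (if x > 0 then x powr a else 0)"

definition onb :: "'u::real_inner set \<Rightarrow> bool" where
  "onb B \<longleftrightarrow> (\<forall>e\<in>B. norm e = 1) \<and> (\<forall>e\<in>B. \<forall>e'\<in>B. e \<noteq> e' \<longrightarrow> inner e e' = 0)
      \<and> closure (span B) = UNIV"

definition L1_plus :: "('u::{real_inner,complete_space} \<Rightarrow> 'u) \<Rightarrow> bool" where
  "L1_plus Q \<longleftrightarrow> bounded_linear Q \<and> (\<forall>x y. inner (Q x) y = inner x (Q y))
     \<and> (\<exists>\<theta>>0. \<forall>x. inner (Q x) x \<ge> \<theta> * (norm x)\<^sup>2)
     \<and> (\<exists>B. onb B \<and> (\<lambda>e. inner (Q e) e) summable_on B)"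

definition trace_op :: "('u::{real_inner,complete_space} \<Rightarrow> 'u) \<Rightarrow> real" where
  "trace_op Q = infsum (\<lambda>e. inner (Q e) e) (SOME B. onb B \<and> (\<lambda>e. inner (Q e) e) summable_on B)"

definition L2_real :: "(real \<Rightarrow> real) \<Rightarrow> bool" where
  "L2_real f \<longleftrightarrow> f \<in> borel_measurable lborel \<and> integrable lborel (\<lambda>r. (f r)\<^sup>2)"

text \<open>Stochastic integral over R w.r.t. a two-sided Q-Wiener process W, for deterministic
  integrands of the form Phi(r) = f(r) Id_U with f in L^2(R): SI f = \<integral>_R f dW^Q.
  Required properties: measurability, linearity, the Ito isometry (note that
  ||f(r) Id Q^(1/2)||_HS^2 = f(r)^2 tr Q), and consistency with W
  (\<integral>_R 1_(0,t] dW = W(t) for t \<ge> 0, \<integral>_R 1_(t,0] dW = W(0) - W(t) = -W(t) for t < 0).\<close>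
definition QWiener_integral ::
  "'w measure \<Rightarrow> ('u::{real_inner,complete_space,second_countable_topology} \<Rightarrow> 'u)
     \<Rightarrow> (real \<Rightarrow> 'w \<Rightarrow> 'u) \<Rightarrow> ((real \<Rightarrow> real) \<Rightarrow> 'w \<Rightarrow> 'u) \<Rightarrow> bool" where
  "QWiener_integral M Q W SI \<longleftrightarrow>
     (\<forall>f. L2_real f \<longrightarrow> SI f \<in> borel_measurable M
          \<and> integrable M (\<lambda>\<omega>. (norm (SI f \<omega>))\<^sup>2)
          \<and> (\<integral>\<omega>. (norm (SI f \<omega>))\<^sup>2 \<partial>M) = trace_op Q * (\<integral>r. (f r)\<^sup>2 \<partial>lborel))
   \<and> (\<forall>f g a b. L2_real f \<longrightarrow> L2_real g \<longrightarrow>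
          (AE \<omega> in M. SI (\<lambda>r. a * f r + b * g r) \<omega> = a *\<^sub>R SI f \<omega> + b *\<^sub>R SI g \<omega>))
   \<and> (\<forall>t\<ge>0. AE \<omega> in M. W t \<omega> = SI (indicator {0<..t}) \<omega>)
   \<and> (\<forall>t<0. AE \<omega> in M. W t \<omega> = - SI (indicator {t<..0}) \<omega>)"

definition C_H :: "real \<Rightarrow> real" where
  "C_H H = (\<integral>r. \<bar>pospow (1 - r) (H - 1/2) - pospow (- r) (H - 1/2)\<bar>\<^sup>2 \<partial>lborel)"

definition K_H :: "real \<Rightarrow> real \<Rightarrow> real \<Rightarrow> real" where
  "K_H H t r = (pospow (t - r) (H - 1/2) - pospow (- r) (H - 1/2)) / C_H H"

definition What :: "((real \<Rightarrow> real) \<Rightarrow> 'w \<Rightarrow> 'u) \<Rightarrow> real \<Rightarrow> real \<Rightarrow> 'w \<Rightarrow> 'u" where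
  "What SI H t = SI (K_H H t)"

definition Zeps :: "((real \<Rightarrow> real) \<Rightarrow> 'w \<Rightarrow> 'u::real_vector) \<Rightarrow> real \<Rightarrow> real \<Rightarrow> real \<Rightarrow> 'w \<Rightarrow> 'u" where
  "Zeps SI \<gamma> \<epsilon> t = (\<lambda>\<omega>. (1 / Gamma \<gamma>) *\<^sub>R
      SI (\<lambda>s. pospow (t - s) (\<gamma> - 1) * exp (- \<epsilon> * (t - s))) \<omega>)"

definition Zbar :: "((real \<Rightarrow> real) \<Rightarrow> 'w \<Rightarrow> 'u::real_vector) \<Rightarrow> real \<Rightarrow> real \<Rightarrow> real \<Rightarrow> 'w \<Rightarrow> 'u" where
  "Zbar SI \<gamma> \<epsilon> t = (\<lambda>\<omega>. (Gamma \<gamma> / C_H (\<gamma> - 1/2)) *\<^sub>R (Zeps SI \<gamma> \<epsilon> t \<omega> - Zeps SI \<gamma> \<epsilon> 0 \<omega>))"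

definition L2norm :: "'w measure \<Rightarrow> ('w \<Rightarrow> 'u::real_normed_vector) \<Rightarrow> real" where
  "L2norm M X = sqrt (\<integral>\<omega>. (norm (X \<omega>))\<^sup>2 \<partial>M)"

end

theory Submission
  imports Defs
begin


lemma lborel_hk:
  fixes f :: "real \<Rightarrow> real"
  assumes m: "f \<in> borel_measurable borel" and nn: "\<And>x. 0 \<le> f x" and I: "(f has_integral I) UNIV"
  shows "integrable lborel f \<and> integral\<^sup>L lborel f = I"
proof -
  have N: "integral\<^sup>N lborel f = ennreal I" using nn_integral_has_integral_lborel[OF m nn I] by simp
  have "0 \<le> I" using I by (rule has_integral_nonneg) (simp add: nn)
  have mm: "f \<in> borel_measurable lborel" using m by simp
  have "integrable lborel f"
    by (rule integrableI_nonneg[OF mm]) (use nn N in auto)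
  moreover have "integral\<^sup>L lborel f = I"
    using integral_eq_nn_integral[OF mm] nn N \<open>0 \<le> I\<close> by simp
  ultimately show ?thesis by blast
qed

lemma tail_int:
  fixes L p :: real assumes "0 < L" "p < -1"
  shows "integrable lborel (\<lambda>x. indicator {L..} x * x powr p)
     \<and> (\<integral>x. indicator {L..} x * x powr p \<partial>lborel) = -(L powr (p+1)) / (p+1)"
proof -
  have "((\<lambda>x. x powr p) has_integral -(L powr (p+1)) / (p+1)) {L..}"
    using has_integral_powr_to_inf[OF assms(2,1)] .
  hence "((\<lambda>x. if x \<in> {L..} then x powr p else 0) has_integral -(L powr (p+1)) / (p+1)) UNIV"
    by (simp only: has_integral_restrict_UNIV)
  moreover have "(\<lambda>x. if x \<in> {L..} then x powr p else 0) = (\<lambda>x. indicator {L..} x * x powr p)"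
    by (auto simp: indicator_def)
  ultimately have H: "((\<lambda>x. indicator {L..} x * x powr p) has_integral -(L powr (p+1)) / (p+1)) UNIV" by simp
  show ?thesis
    by (rule lborel_hk[OF _ _ H]) (auto simp: indicator_def)
qed

lemma near_int:
  fixes c p :: real assumes "0 \<le> c" "-1 < p"
  shows "integrable lborel (\<lambda>x. indicator {0..c} x * x powr p)"
proof -
  have "((\<lambda>x. x powr p) has_integral c powr (p+1) / (p+1)) {0..c}"
    using has_integral_powr_from_0[OF assms(2,1)] .
  hence "((\<lambda>x. if x \<in> {0..c} then x powr p else 0) has_integral c powr (p+1) / (p+1)) UNIV"
    by (simp only: has_integral_restrict_UNIV)
  moreover have "(\<lambda>x. if x \<in> {0..c} then x powr p else 0) = (\<lambda>x. indicator {0..c} x * x powr p)"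
    by (auto simp: indicator_def)
  ultimately have H: "((\<lambda>x. indicator {0..c} x * x powr p) has_integral c powr (p+1) / (p+1)) UNIV" by simp
  show ?thesis
    using lborel_hk[OF _ _ H] by (auto simp: indicator_def)
qed

lemma exp_int:
  fixes a c :: real assumes "0 < a"
  shows "integrable lborel (\<lambda>x. indicator {c..} x * exp (-a*x))"
proof -
  have "((\<lambda>x. exp (-a*x)) has_integral exp (-a*c)/a) {c..}"
    using has_integral_exp_minus_to_infinity[OF assms] .
  hence "((\<lambda>x. if x \<in> {c..} then exp (-a*x) else 0) has_integral exp (-a*c)/a) UNIV"
    by (simp only: has_integral_restrict_UNIV)
  moreover have "(\<lambda>x. if x \<in> {c..} then exp (-a*x) else 0) = (\<lambda>x. indicator {c..} x * exp (-a*x))"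
    by (auto simp: indicator_def)
  ultimately have H: "((\<lambda>x. indicator {c..} x * exp (-a*x)) has_integral exp (-a*c)/a) UNIV" by simp
  show ?thesis
    using lborel_hk[OF _ _ H] by (auto simp: indicator_def)
qed

lemma pospow_meas[measurable]:
  assumes [measurable]: "f \<in> borel_measurable M"
  shows "(\<lambda>x. pospow (f x) a) \<in> borel_measurable M"
  unfolding pospow_def by measurable

lemma L2_real_lin:
  assumes f: "L2_real f" and g: "L2_real g"
  shows "L2_real (\<lambda>r. c * f r + d * g r)"
proof -
  have fm[measurable]: "f \<in> borel_measurable lborel" and gm[measurable]: "g \<in> borel_measurable lborel"
    using f g by (auto simp: L2_real_def)
  have i: "integrable lborel (\<lambda>r. 2*c\<^sup>2 * (f r)\<^sup>2 + 2*d\<^sup>2*(g r)\<^sup>2)"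
    using f g by (auto simp: L2_real_def)
  have b: "(c * f r + d * g r)\<^sup>2 \<le> 2*c\<^sup>2 * (f r)\<^sup>2 + 2*d\<^sup>2*(g r)\<^sup>2" for r
  proof -
    have "0 \<le> (c * f r - d * g r)\<^sup>2" by simp
    thus ?thesis by (simp add: power2_eq_square algebra_simps)
  qed
  have "integrable lborel (\<lambda>r. (c * f r + d * g r)\<^sup>2)"
    by (rule Bochner_Integration.integrable_bound[OF i]) (use b in \<open>auto intro!: AE_I2 simp: abs_of_nonneg\<close>)
  thus ?thesis by (simp add: L2_real_def)
qed

lemma L2_of_bound:
  assumes [measurable]: "f \<in> borel_measurable lborel" and B: "integrable lborel B"
    and le: "\<And>r. (f r)\<^sup>2 \<le> B r"
  shows "L2_real f"
proof -
  have "integrable lborel (\<lambda>r. (f r)\<^sup>2)"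
    by (rule Bochner_Integration.integrable_bound[OF B]) (use le in \<open>auto intro!: AE_I2 intro: order_trans[OF _ abs_ge_self]\<close>)
  thus ?thesis by (simp add: L2_real_def)
qed



definition phi :: "real \<Rightarrow> real \<Rightarrow> real \<Rightarrow> real" where
  "phi a e y = pospow y a * (1 - exp (-e*y))"

lemma gderiv:
  fixes y e a :: real
  assumes "0 < y"
  shows "((\<lambda>y. y powr a * (1 - exp (-e*y))) has_real_derivative
     (a * y powr (a-1) * (1 - exp (-e*y)) + y powr a * (e * exp (-e*y)))) (at y)"
  using assms by (auto intro!: derivative_eq_intros simp: algebra_simps)

lemma dbound:
  fixes y e a :: real
  assumes "0 < y" "0 < e"
  shows "\<bar>a * y powr (a-1) * (1 - exp (-e*y)) + y powr a * (e * exp (-e*y))\<bar> \<le> (\<bar>a\<bar>+1) * y powr (a-1)"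
proof -
  have "0 < e*y" using assms by simp
  hence e1: "0 \<le> 1 - exp (-e*y)" "1 - exp (-e*y) \<le> 1" by auto
  have "\<bar>a * y powr (a-1) * (1 - exp (-e*y))\<bar> = \<bar>a\<bar> * y powr (a-1) * (1 - exp (-e*y))"
    using e1 by (simp add: abs_mult)
  also have "\<dots> \<le> \<bar>a\<bar> * y powr (a-1)" using e1 by (simp add: mult_left_le)
  finally have A1: "\<bar>a * y powr (a-1) * (1 - exp (-e*y))\<bar> \<le> \<bar>a\<bar> * y powr (a-1)" .
  have ya: "y powr a = y powr (a-1) * y"
    using assms powr_add[of y "a-1" 1] by simp
  have "(e*y) * exp (-e*y) \<le> 1"
  proof -
    have "e*y \<le> exp (e*y)" using exp_ge_add_one_self[of "e*y"] by linarith
    thus ?thesis by (simp add: exp_minus field_simps)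
  qed
  hence "y powr a * (e * exp (-e*y)) \<le> y powr (a-1)"
    using ya mult_left_le[of "(e*y) * exp (-e*y)" "y powr (a-1)"] by (simp add: algebra_simps)
  moreover have "0 \<le> y powr a * (e * exp (-e*y))" using assms by simp
  ultimately show ?thesis using A1 by (simp add: algebra_simps abs_le_iff)
qed

lemma gmvt:
  fixes p q e a :: real
  assumes "0 < p" "p \<le> q" "0 < e" "a < 1"
  shows "abs (q powr a * (1 - exp (-e*q)) - p powr a * (1 - exp (-e*p))) \<le> (q - p) * ((\<bar>a\<bar>+1) * p powr (a-1))"
proof (cases "p = q")
  case True then show ?thesis by simp
next
  case False
  hence "p < q" using assms by simp
  from MVT2[OF this, of "\<lambda>y. y powr a * (1 - exp (-e*y))"
      "\<lambda>y. a * y powr (a-1) * (1 - exp (-e*y)) + y powr a * (e * exp (-e*y))"]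
  obtain z where z: "p < z" "z < q" and eq: "q powr a * (1 - exp (-e*q)) - p powr a * (1 - exp (-e*p))
     = (q - p) * (a * z powr (a-1) * (1 - exp (-e*z)) + z powr a * (e * exp (-e*z)))"
    using gderiv assms by force
  have "\<bar>a * z powr (a-1) * (1 - exp (-e*z)) + z powr a * (e * exp (-e*z))\<bar> \<le> (\<bar>a\<bar>+1) * z powr (a-1)"
    using dbound[of z e a] z assms by simp
  also have "\<dots> \<le> (\<bar>a\<bar>+1) * p powr (a-1)"
    using z assms by (intro mult_left_mono powr_mono2') auto
  finally show ?thesis unfolding eq abs_mult using \<open>p<q\<close> by (simp add: mult_left_mono)
qed



lemma phi_small:
  fixes a e y M :: real
  assumes "-1 < a" "0 < e" "y \<le> M"
  shows "\<bar>phi a e y\<bar> \<le> e * M powr (a+1)"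
proof (cases "0 < y")
  case False thus ?thesis using assms by (simp add: phi_def pospow_def)
next
  case True
  have z: "1 - exp (-e*y) \<le> e*y" using exp_ge_add_one_self[of "-e*y"] by simp
  have "0 < e*y" using True assms by simp
  hence z0: "0 \<le> 1 - exp (-e*y)" by simp
  have "phi a e y = y powr a * (1 - exp (-e*y))" using True by (simp add: phi_def pospow_def)
  also have "\<dots> \<le> y powr a * (e*y)" using z by (intro mult_left_mono) auto
  also have "\<dots> = e * y powr (a+1)" using True powr_add[of y a 1] by simp
  also have "\<dots> \<le> e * M powr (a+1)" using True assms by (intro mult_left_mono powr_mono2) auto
  finally show ?thesis using z0 True by (simp add: phi_def pospow_def)
qed

lemma sq_powr: "0 < (z::real) \<Longrightarrow> (z powr b)\<^sup>2 = z powr (2*b)"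
  by (simp add: powr_power)

lemma phi_bound:
  fixes a e T L t x :: real
  assumes a1: "-1 < a" and a2: "a < 1/2" and e: "0 < e" and T: "0 < T" and t: "\<bar>t\<bar> \<le> T" and L: "2*T+1 \<le> L"
  shows "(phi a e (t+x) - phi a e x)\<^sup>2 \<le> indicator {-T..L} x * (4 * e\<^sup>2 * (T+L) powr (2*a+2))
     + indicator {L..} x * ((T * (\<bar>a\<bar>+1))\<^sup>2 * 2 powr (2-2*a) * x powr (2*a-2))"
  (is "?l \<le> ?r")
proof -
  have r1: "0 \<le> indicator {-T..L} x * (4 * e\<^sup>2 * (T+L) powr (2*a+2))" by simp
  have r2: "0 \<le> indicator {L..} x * ((T * (\<bar>a\<bar>+1))\<^sup>2 * 2 powr (2-2*a) * x powr (2*a-2))" by simp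
  consider "x < -T" | "-T \<le> x \<and> x \<le> L" | "L < x" by linarith
  then show ?thesis
  proof cases
    case 1
    hence "t + x \<le> 0" "x \<le> 0" using t T by auto
    hence "?l = 0" by (simp add: phi_def pospow_def)
    thus ?thesis using r1 r2 by linarith
  next
    case 2
    define M where "M = e * (T+L) powr (a+1)"
    have "\<bar>phi a e (t+x)\<bar> \<le> M" unfolding M_def using 2 t a1 e by (intro phi_small) auto
    moreover have "\<bar>phi a e x\<bar> \<le> M" unfolding M_def using 2 t a1 e T by (intro phi_small) auto
    ultimately have "\<bar>phi a e (t+x) - phi a e x\<bar> \<le> 2*M" by linarith
    hence "?l \<le> (2*M)\<^sup>2" by (metis abs_ge_zero power2_abs power_mono)
    also have "(2*M)\<^sup>2 = 4 * e\<^sup>2 * (T+L) powr (2*a+2)"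
      unfolding M_def using T L by (simp add: power_mult_distrib sq_powr algebra_simps)
    finally have "?l \<le> indicator {-T..L} x * (4 * e\<^sup>2 * (T+L) powr (2*a+2))" using 2 by simp
    thus ?thesis using r2 by linarith
  next
    case 3
    have x0: "0 < x" "2*T \<le> x" using 3 L T by auto
    define p where "p = min x (t+x)"
    define q where "q = max x (t+x)"
    have pq: "x/2 \<le> p" "p \<le> q" "q - p = \<bar>t\<bar>" using x0 t by (auto simp: p_def q_def)
    have p0: "0 < p" using pq x0 by linarith
    have "\<bar>phi a e (t+x) - phi a e x\<bar> = abs (q powr a * (1 - exp (-e*q)) - p powr a * (1 - exp (-e*p)))"
      using p0 pq by (auto simp: phi_def pospow_def p_def q_def min_def max_def abs_minus_commute)
    also have "\<dots> \<le> (q - p) * ((\<bar>a\<bar>+1) * p powr (a-1))"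
      using gmvt[of p q e a] p0 pq e a2 by simp
    also have "\<dots> \<le> T * ((\<bar>a\<bar>+1) * (x/2) powr (a-1))"
      using pq t p0 x0 a2 by (intro mult_mono mult_left_mono powr_mono2') auto
    finally have B: "\<bar>phi a e (t+x) - phi a e x\<bar> \<le> T * ((\<bar>a\<bar>+1) * (x/2) powr (a-1))" .
    hence "?l \<le> (T * ((\<bar>a\<bar>+1) * (x/2) powr (a-1)))\<^sup>2" by (metis abs_ge_zero power2_abs power_mono)
    also have "\<dots> = (T * (\<bar>a\<bar>+1))\<^sup>2 * ((x/2) powr (a-1))\<^sup>2" by (simp add: power_mult_distrib)
    also have "((x/2) powr (a-1))\<^sup>2 = (x/2) powr (2*a-2)" using x0 by (simp add: sq_powr algebra_simps)
    also have "(x/2) powr (2*a-2) = 2 powr (2-2*a) * x powr (2*a-2)"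
    proof -
      have "(x/2) powr (2*a-2) = x powr (2*a-2) / 2 powr (2*a-2)" by (rule powr_divide)
      also have "1 / 2 powr (2*a-2) = 2 powr (2-2*a)" using powr_minus_divide[of 2 "2*a-2"] powr_minus[of 2 "2*a-2"] by simp
      hence "x powr (2*a-2) / 2 powr (2*a-2) = 2 powr (2-2*a) * x powr (2*a-2)" by (metis times_divide_eq_left mult.commute mult_1)
      finally show ?thesis .
    qed
    finally have "?l \<le> (T * (\<bar>a\<bar>+1))\<^sup>2 * (2 powr (2-2*a) * x powr (2*a-2))" .
    hence "?l \<le> indicator {L..} x * ((T * (\<bar>a\<bar>+1))\<^sup>2 * 2 powr (2-2*a) * x powr (2*a-2))"
      using 3 by (simp add: mult.assoc)
    thus ?thesis using r1 by linarith
  qed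
qed



lemma phi_meas[measurable]:
  assumes [measurable]: "f \<in> borel_measurable M"
  shows "(\<lambda>x. phi a e (f x)) \<in> borel_measurable M"
  unfolding phi_def by measurable

lemma E_bound:
  fixes a e T L t :: real
  assumes a1: "-1 < a" and a2: "a < 1/2" and e: "0 < e" and T: "0 < T" and t: "\<bar>t\<bar> \<le> T" and L: "2*T+1 \<le> L"
  shows "integrable lborel (\<lambda>r. (phi a e (t - r) - phi a e (-r))\<^sup>2)"
    "(\<integral>r. (phi a e (t - r) - phi a e (-r))\<^sup>2 \<partial>lborel) \<le>
      4 * e\<^sup>2 * (T+L) powr (2*a+2) * (L+T) + (T * (\<bar>a\<bar>+1))\<^sup>2 * 2 powr (2-2*a) * (L powr (2*a-1) / (1-2*a))"
proof -
  define K where "K = (T * (\<bar>a\<bar>+1))\<^sup>2 * 2 powr (2-2*a)"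
  define c where "c = 4 * e\<^sup>2 * (T+L) powr (2*a+2)"
  define B where "B = (\<lambda>x. indicator {-T..L} x * c + indicator {L..} x * (K * x powr (2*a-2)))"
  have L0: "0 < L" using T L by simp
  have TI: "integrable lborel (\<lambda>x. indicator {L..} x * x powr (2*a-2))"
    and TV: "(\<integral>x. indicator {L..} x * x powr (2*a-2) \<partial>lborel) = -(L powr (2*a-2+1)) / (2*a-2+1)"
    using tail_int[OF L0, of "2*a-2"] a2 by auto
  have I1: "integrable lborel (\<lambda>x. indicator {-T..L} x * c)"
    by (intro integrable_mult_left integrable_real_indicator) (auto simp: emeasure_lborel_Icc_eq)
  have I2: "integrable lborel (\<lambda>x. indicator {L..} x * (K * x powr (2*a-2)))"
    using integrable_mult_right[OF TI, of K] by (simp add: algebra_simps)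
  have BI: "integrable lborel B" unfolding B_def using I1 I2 by (rule Bochner_Integration.integrable_add)
  have V1: "(\<integral>x. indicator {-T..L} x * c \<partial>lborel) = c * (L+T)"
    using L T by simp
  have V2: "(\<integral>x. indicator {L..} x * (K * x powr (2*a-2)) \<partial>lborel) = K * (L powr (2*a-1) / (1-2*a))"
  proof -
    have "(\<integral>x. indicator {L..} x * (K * x powr (2*a-2)) \<partial>lborel) = K * (\<integral>x. indicator {L..} x * x powr (2*a-2) \<partial>lborel)"
      by (simp add: algebra_simps)
    also have "\<dots> = K * (L powr (2*a-1) / (1-2*a))"
    proof -
      have e1: "2*a-2+1 = 2*a-1" by simp
      have "-(L powr (2*a-1)) / (2*a-1) = L powr (2*a-1) / (1-2*a)"
        using a2 by (simp add: divide_simps algebra_simps)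
      thus ?thesis using TV unfolding e1 by simp
    qed
    finally show ?thesis .
  qed
  have BV: "integral\<^sup>L lborel B = c * (L+T) + K * (L powr (2*a-1) / (1-2*a))"
    unfolding B_def using I1 I2 V1 V2 by simp
  have pb: "(phi a e (t+x) - phi a e x)\<^sup>2 \<le> B x" for x
    unfolding B_def c_def K_def using phi_bound[OF a1 a2 e T t L, of x] by (simp add: mult.assoc)
  have Ix: "integrable lborel (\<lambda>x. (phi a e (t+x) - phi a e x)\<^sup>2)"
    by (rule Bochner_Integration.integrable_bound[OF BI]) (use pb in \<open>auto intro!: AE_I2 intro: order_trans[OF _ abs_ge_self]\<close>)
  have Ixv: "(\<integral>x. (phi a e (t+x) - phi a e x)\<^sup>2 \<partial>lborel) \<le> integral\<^sup>L lborel B"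
    by (rule integral_mono[OF Ix BI]) (use pb in auto)
  have eqf: "(\<lambda>x. (\<lambda>r. (phi a e (t - r) - phi a e (-r))\<^sup>2) (0 + (-1) * x)) = (\<lambda>x. (phi a e (t+x) - phi a e x)\<^sup>2)"
    by simp
  show "integrable lborel (\<lambda>r. (phi a e (t - r) - phi a e (-r))\<^sup>2)"
    using lborel_integrable_real_affine_iff[of "-1" "\<lambda>r. (phi a e (t - r) - phi a e (-r))\<^sup>2" 0] Ix eqf by simp
  have "(\<integral>r. (phi a e (t - r) - phi a e (-r))\<^sup>2 \<partial>lborel) = (\<integral>x. (phi a e (t+x) - phi a e x)\<^sup>2 \<partial>lborel)"
    using lborel_integral_real_affine[of "-1" "\<lambda>r. (phi a e (t - r) - phi a e (-r))\<^sup>2" 0] eqf by simp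
  also have "\<dots> \<le> c * (L+T) + K * (L powr (2*a-1) / (1-2*a))" using Ixv BV by simp
  finally show "(\<integral>r. (phi a e (t - r) - phi a e (-r))\<^sup>2 \<partial>lborel) \<le>
      4 * e\<^sup>2 * (T+L) powr (2*a+2) * (L+T) + (T * (\<bar>a\<bar>+1))\<^sup>2 * 2 powr (2-2*a) * (L powr (2*a-1) / (1-2*a))"
    unfolding c_def K_def .
qed



lemma det_lim:
  fixes a T \<eta> :: real
  assumes a1: "-1 < a" and a2: "a < 1/2" and T: "0 < T" and eta: "0 < \<eta>"
  shows "\<forall>\<^sub>F e in at_right 0. 0 < e \<and> (\<forall>t. \<bar>t\<bar> \<le> T \<longrightarrow>
           (\<integral>r. (phi a e (t - r) - phi a e (-r))\<^sup>2 \<partial>lborel) \<le> \<eta>)"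
proof -
  define K where "K = (T * (\<bar>a\<bar>+1))\<^sup>2 * 2 powr (2-2*a)"
  have "((\<lambda>L::real. L powr (2*a-1)) \<longlongrightarrow> 0) at_top"
    using a2 by (intro tendsto_neg_powr filterlim_ident) auto
  hence "((\<lambda>L::real. K * (L powr (2*a-1) / (1-2*a))) \<longlongrightarrow> K * (0 / (1-2*a))) at_top"
    by (intro tendsto_intros) (use a2 in auto)
  hence "\<forall>\<^sub>F L in at_top. K * (L powr (2*a-1) / (1-2*a)) < \<eta>/2"
    using eta by (intro order_tendstoD(2)) auto
  moreover have "\<forall>\<^sub>F L in at_top. 2*T+1 \<le> (L::real)" by (rule eventually_ge_at_top)
  ultimately have "\<forall>\<^sub>F L in at_top. K * (L powr (2*a-1) / (1-2*a)) < \<eta>/2 \<and> 2*T+1 \<le> (L::real)"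
    by (rule eventually_conj)
  then obtain L where L1: "K * (L powr (2*a-1) / (1-2*a)) < \<eta>/2" and L2: "2*T+1 \<le> L"
    by (auto simp: eventually_at_top_linorder)
  have "((\<lambda>e::real. 4 * e\<^sup>2 * (T+L) powr (2*a+2) * (L+T)) \<longlongrightarrow> 4 * 0\<^sup>2 * (T+L) powr (2*a+2) * (L+T)) (at_right 0)"
    by (intro tendsto_intros)
  hence "\<forall>\<^sub>F e in at_right 0. 4 * e\<^sup>2 * (T+L) powr (2*a+2) * (L+T) < \<eta>/2"
    using eta by (intro order_tendstoD(2)) auto
  moreover have "\<forall>\<^sub>F e in at_right (0::real). 0 < e" by (simp add: eventually_at_right_less)
  ultimately show ?thesis
  proof eventually_elim
    case (elim e)
    show ?case
    proof (intro conjI allI impI)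
      fix t :: real assume t: "\<bar>t\<bar> \<le> T"
      have "(\<integral>r. (phi a e (t - r) - phi a e (-r))\<^sup>2 \<partial>lborel) \<le>
        4 * e\<^sup>2 * (T+L) powr (2*a+2) * (L+T) + K * (L powr (2*a-1) / (1-2*a))"
        using E_bound(2)[OF a1 a2 _ T t L2, of e] elim unfolding K_def by simp
      thus "(\<integral>r. (phi a e (t - r) - phi a e (-r))\<^sup>2 \<partial>lborel) \<le> \<eta>" using elim L1 by linarith
    qed (use elim in simp)
  qed
qed



lemma psi_L2:
  fixes a e t :: real
  assumes a1: "-1/2 < a" and a2: "a < 1/2" and e: "0 < e"
  shows "L2_real (\<lambda>s. pospow (t-s) a * exp (-e*(t-s)))"
proof -
  define B where "B = (\<lambda>y. indicator {0..1} y * y powr (2*a) + (1/e) * (indicator {1..} y * exp (-e*y)))"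
  have I1: "integrable lborel (\<lambda>y. indicator {0..1} y * y powr (2*a))"
    using near_int[of 1 "2*a"] a1 by simp
  have I2: "integrable lborel (\<lambda>y. (1/e) * (indicator {1..} y * exp (-e*y)))"
    using exp_int[OF e, of 1] by (intro integrable_mult_right) simp
  have BI: "integrable lborel B" unfolding B_def using I1 I2 by (rule Bochner_Integration.integrable_add)
  have pb: "(pospow y a * exp (-e*y))\<^sup>2 \<le> B y" for y
  proof -
    have b0: "0 \<le> indicator {0..1} y * y powr (2*a)" "0 \<le> (1/e) * (indicator {1..} y * exp (-e*y))"
      using e by auto
    consider "y \<le> 0" | "0 < y \<and> y \<le> 1" | "1 < y" by linarith
    thus ?thesis
    proof cases
      case 1 thus ?thesis using b0 by (simp add: B_def pospow_def)
    next
      case 2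
      have "(pospow y a * exp (-e*y))\<^sup>2 = y powr (2*a) * (exp (-e*y))\<^sup>2"
        using 2 by (simp add: pospow_def power_mult_distrib sq_powr)
      also have "\<dots> \<le> y powr (2*a) * 1"
        using 2 e by (intro mult_left_mono) (auto simp: power_le_one)
      finally show ?thesis using 2 b0 by (simp add: B_def)
    next
      case 3
      have "(pospow y a * exp (-e*y))\<^sup>2 = y powr (2*a) * (exp (-e*y) * exp (-e*y))"
      proof -
        have "(pospow y a)\<^sup>2 = y powr (2*a)" using 3 by (simp add: pospow_def sq_powr)
        thus ?thesis by (simp add: power_mult_distrib power2_eq_square)
      qed
      also have "\<dots> \<le> y * (exp (-e*y) * exp (-e*y))"
        using 3 a2 by (intro mult_right_mono) (auto intro: order_trans[OF powr_mono[of "2*a" 1 y]])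
      also have "\<dots> = (1/e) * ((e*y) * exp (-e*y)) * exp (-e*y)" using e by simp
      also have "\<dots> \<le> (1/e) * 1 * exp (-e*y)"
      proof -
        have "e*y \<le> exp (e*y)" using exp_ge_add_one_self[of "e*y"] by linarith
        hence "(e*y) * exp (-e*y) \<le> 1" by (simp add: exp_minus field_simps)
        thus ?thesis using e by (intro mult_right_mono mult_left_mono) auto
      qed
      finally show ?thesis using 3 b0 by (simp add: B_def)
    qed
  qed
  have Iy: "integrable lborel (\<lambda>y. (pospow y a * exp (-e*y))\<^sup>2)"
    by (rule Bochner_Integration.integrable_bound[OF BI]) (use pb in \<open>auto intro!: AE_I2 intro: order_trans[OF _ abs_ge_self]\<close>)
  have "integrable lborel (\<lambda>s. (pospow (t-s) a * exp (-e*(t-s)))\<^sup>2)"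
    using lborel_integrable_real_affine_iff[of "-1" "\<lambda>s. (pospow (t-s) a * exp (-e*(t-s)))\<^sup>2" t] Iy by simp
  thus ?thesis by (simp add: L2_real_def)
qed

lemma phid_L2:
  fixes a e t :: real
  assumes a1: "-1 < a" and a2: "a < 1/2" and e: "0 < e"
  shows "L2_real (\<lambda>r. phi a e (t - r) - phi a e (-r))"
  using E_bound(1)[OF a1 a2 e, of "\<bar>t\<bar>+1" t "2*(\<bar>t\<bar>+1)+1"] by (simp add: L2_real_def)

lemma L2_cong: "L2_real f \<Longrightarrow> (\<And>r. f r = g r) \<Longrightarrow> L2_real g"
  by (metis ext)

lemma KH_eq: "K_H (\<gamma> - 1/2) t r = (phi (\<gamma>-1) 1 (t - r) - phi (\<gamma>-1) 1 (-r)) / C_H (\<gamma> - 1/2)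
   + (pospow (t-r) (\<gamma>-1) * exp (-1*(t-r)) - pospow (0-r) (\<gamma>-1) * exp (-1*(0-r))) / C_H (\<gamma> - 1/2)"
proof -
  have "\<gamma> - 1/2 - 1/2 = \<gamma> - 1" by simp
  thus ?thesis unfolding K_H_def phi_def by (simp add: diff_divide_distrib[symmetric] add_divide_distrib[symmetric] algebra_simps)
qed

lemma KH_L2:
  assumes g1: "1/2 < \<gamma>" and g2: "\<gamma> < 3/2"
  shows "L2_real (K_H (\<gamma> - 1/2) t)"
proof -
  have a1: "-1/2 < \<gamma>-1" "\<gamma>-1 < 1/2" using g1 g2 by auto
  have A: "L2_real (\<lambda>r. phi (\<gamma>-1) 1 (t - r) - phi (\<gamma>-1) 1 (-r))" using phid_L2[of "\<gamma>-1" 1 t] a1 by simp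
  have P1: "L2_real (\<lambda>s. pospow (t-s) (\<gamma>-1) * exp (-1*(t-s)))" using psi_L2[of "\<gamma>-1" 1 t] a1 by simp
  have P0: "L2_real (\<lambda>s. pospow (0-s) (\<gamma>-1) * exp (-1*(0-s)))" using psi_L2[of "\<gamma>-1" 1 0] a1 by simp
  have P: "L2_real (\<lambda>r. 1 * pospow (t-r) (\<gamma>-1) * exp (-1*(t-r)) + (-1) * (pospow (0-r) (\<gamma>-1) * exp (-1*(0-r))))"
    using L2_real_lin[OF P1 P0, of 1 "-1"] by simp
  have "L2_real (\<lambda>r. (1 / C_H (\<gamma> - 1/2)) * (phi (\<gamma>-1) 1 (t - r) - phi (\<gamma>-1) 1 (-r)) + (1 / C_H (\<gamma> - 1/2)) *
     (1 * pospow (t-r) (\<gamma>-1) * exp (-1*(t-r)) + (-1) * (pospow (0-r) (\<gamma>-1) * exp (-1*(0-r)))))"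
    by (rule L2_real_lin[OF A P])
  thus ?thesis
  proof (rule L2_cong)
    fix r
    show "(1 / C_H (\<gamma> - 1/2)) * (phi (\<gamma>-1) 1 (t - r) - phi (\<gamma>-1) 1 (-r)) + (1 / C_H (\<gamma> - 1/2)) *
     (1 * pospow (t-r) (\<gamma>-1) * exp (-1*(t-r)) + (-1) * (pospow (0-r) (\<gamma>-1) * exp (-1*(0-r)))) = K_H (\<gamma> - 1/2) t r"
      unfolding KH_eq[of \<gamma> t r] by (simp add: diff_divide_distrib add_divide_distrib)
  qed
qed



lemma divaux: "(p1-p0)/C - p1*e1/C + p0*e0/C = (p1*(1-e1) - p0*(1-e0))/(C::real)"
  by (cases "C=0") (simp_all add: field_simps)

lemma L2norm_eq:
  fixes M :: "'w measure"
    and Q :: "'u::{real_inner,complete_space,second_countable_topology} \<Rightarrow> 'u"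
    and W :: "real \<Rightarrow> 'w \<Rightarrow> 'u"
    and SI :: "(real \<Rightarrow> real) \<Rightarrow> 'w \<Rightarrow> 'u"
    and \<gamma> e t :: real
  assumes QW: "QWiener_integral M Q W SI"
    and g1: "1/2 < \<gamma>" and g2: "\<gamma> < 3/2" and e: "0 < e"
  shows "L2norm M (\<lambda>\<omega>. What SI (\<gamma> - 1/2) t \<omega> - Zbar SI \<gamma> e t \<omega>) =
     sqrt (trace_op Q * ((\<integral>r. (phi (\<gamma>-1) e (t - r) - phi (\<gamma>-1) e (-r))\<^sup>2 \<partial>lborel) / (C_H (\<gamma> - 1/2))\<^sup>2))"
proof -
  define C where "C = C_H (\<gamma> - 1/2)"
  define c where "c = 1 / C"
  define G where "G = Gamma \<gamma>"
  have G0: "G \<noteq> 0"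
  proof -
    have "0 < \<gamma>" using g1 by simp
    hence "0 < Gamma \<gamma>" by (rule Gamma_real_pos)
    thus ?thesis unfolding G_def by simp
  qed
  define Kt where "Kt = K_H (\<gamma> - 1/2) t"
  define ft where "ft = (\<lambda>s. pospow (t - s) (\<gamma> - 1) * exp (- e * (t - s)))"
  define f0 where "f0 = (\<lambda>s. pospow (0 - s) (\<gamma> - 1) * exp (- e * (0 - s)))"
  define D1 where "D1 = (\<lambda>r. 1 * Kt r + (-c) * ft r)"
  define D where "D = (\<lambda>r. 1 * D1 r + c * f0 r)"
  have a1: "-1/2 < \<gamma>-1" "\<gamma>-1 < 1/2" using g1 g2 by auto
  have LK: "L2_real Kt" unfolding Kt_def using KH_L2[OF g1 g2] .
  have Lft: "L2_real ft" unfolding ft_def using psi_L2[OF a1 e, of t] by simp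
  have Lf0: "L2_real f0" unfolding f0_def using psi_L2[OF a1 e, of 0] by simp
  have LD1: "L2_real D1" unfolding D1_def by (rule L2_real_lin[OF LK Lft])
  have LD: "L2_real D" unfolding D_def by (rule L2_real_lin[OF LD1 Lf0])
  note QWd = QW[unfolded QWiener_integral_def]
  have iso: "\<And>f. L2_real f \<Longrightarrow> SI f \<in> borel_measurable M \<and> integrable M (\<lambda>\<omega>. (norm (SI f \<omega>))\<^sup>2)
          \<and> (\<integral>\<omega>. (norm (SI f \<omega>))\<^sup>2 \<partial>M) = trace_op Q * (\<integral>r. (f r)\<^sup>2 \<partial>lborel)"
    using conjunct1[OF QWd] by blast
  have lin: "\<And>f g a b. L2_real f \<Longrightarrow> L2_real g \<Longrightarrow>
          (AE \<omega> in M. SI (\<lambda>r. a * f r + b * g r) \<omega> = a *\<^sub>R SI f \<omega> + b *\<^sub>R SI g \<omega>)"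
    using conjunct1[OF conjunct2[OF QWd]] by blast
  have m1[measurable]: "SI Kt \<in> borel_measurable M" using iso[OF LK] by blast
  have m2[measurable]: "SI ft \<in> borel_measurable M" using iso[OF Lft] by blast
  have m3[measurable]: "SI f0 \<in> borel_measurable M" using iso[OF Lf0] by blast
  have m4[measurable]: "SI D \<in> borel_measurable M" using iso[OF LD] by blast
  have AE1: "AE \<omega> in M. SI D1 \<omega> = 1 *\<^sub>R SI Kt \<omega> + (-c) *\<^sub>R SI ft \<omega>"
    unfolding D1_def by (rule lin[OF LK Lft])
  have AE2: "AE \<omega> in M. SI D \<omega> = 1 *\<^sub>R SI D1 \<omega> + c *\<^sub>R SI f0 \<omega>"
    unfolding D_def by (rule lin[OF LD1 Lf0])
  have eqW: "\<And>\<omega>. What SI (\<gamma> - 1/2) t \<omega> - Zbar SI \<gamma> e t \<omega> = SI Kt \<omega> - c *\<^sub>R (SI ft \<omega> - SI f0 \<omega>)"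
    using G0 unfolding What_def Zbar_def Zeps_def Kt_def ft_def f0_def c_def C_def G_def
    by (simp add: scaleR_diff_right)
  have AE3: "AE \<omega> in M. (norm (What SI (\<gamma> - 1/2) t \<omega> - Zbar SI \<gamma> e t \<omega>))\<^sup>2 = (norm (SI D \<omega>))\<^sup>2"
    using AE1 AE2 proof eventually_elim
    case (elim \<omega>)
    have h1: "SI D1 \<omega> = SI Kt \<omega> - c *\<^sub>R SI ft \<omega>" using elim(1) by simp
    have h2: "SI D \<omega> = SI Kt \<omega> - c *\<^sub>R SI ft \<omega> + c *\<^sub>R SI f0 \<omega>" using elim(2) h1 by simp
    have h3: "SI Kt \<omega> - c *\<^sub>R (SI ft \<omega> - SI f0 \<omega>) = SI Kt \<omega> - c *\<^sub>R SI ft \<omega> + c *\<^sub>R SI f0 \<omega>"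
      by (simp add: scaleR_diff_right)
    show ?case unfolding eqW h2 h3 ..
  qed
  have "(\<integral>\<omega>. (norm (What SI (\<gamma> - 1/2) t \<omega> - Zbar SI \<gamma> e t \<omega>))\<^sup>2 \<partial>M) = (\<integral>\<omega>. (norm (SI D \<omega>))\<^sup>2 \<partial>M)"
    by (rule integral_cong_AE[OF _ _ AE3]) (simp_all add: eqW)
  also have "\<dots> = trace_op Q * (\<integral>r. (D r)\<^sup>2 \<partial>lborel)" using iso[OF LD] by blast
  also have "(\<integral>r. (D r)\<^sup>2 \<partial>lborel) = (\<integral>r. (phi (\<gamma>-1) e (t - r) - phi (\<gamma>-1) e (-r))\<^sup>2 / C\<^sup>2 \<partial>lborel)"
  proof (rule Bochner_Integration.integral_cong[OF refl])
    fix r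
    have ex: "\<gamma> - 1/2 - 1/2 = \<gamma> - 1" by simp
    have "D r = (phi (\<gamma>-1) e (t - r) - phi (\<gamma>-1) e (-r)) / C"
      unfolding D_def D1_def Kt_def ft_def f0_def c_def K_H_def phi_def ex C_def[symmetric]
      using divaux[of "pospow (t - r) (\<gamma> - 1)" "pospow (- r) (\<gamma> - 1)" C "exp (- (e * (t - r)))" "exp (e * r)"]
      by simp
    thus "(D r)\<^sup>2 = (phi (\<gamma>-1) e (t - r) - phi (\<gamma>-1) e (-r))\<^sup>2 / C\<^sup>2" by (simp add: power_divide)
  qed
  also have "\<dots> = (\<integral>r. (phi (\<gamma>-1) e (t - r) - phi (\<gamma>-1) e (-r))\<^sup>2 \<partial>lborel) / C\<^sup>2" by simp
  finally show ?thesis unfolding L2norm_def C_def by simp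
qed



theorem proposition5p3:
  fixes M :: "'w measure"
    and Q :: "'u::{real_inner,complete_space,second_countable_topology} \<Rightarrow> 'u"
    and W :: "real \<Rightarrow> 'w \<Rightarrow> 'u"
    and SI :: "(real \<Rightarrow> real) \<Rightarrow> 'w \<Rightarrow> 'u"
    and \<gamma> T :: real
  assumes "prob_space M"
    and "L1_plus Q"
    and "QWiener_integral M Q W SI"
    and "1/2 < \<gamma>" and "\<gamma> < 3/2"
    and "0 < T"
  shows "((\<lambda>\<epsilon>. SUP t\<in>{-T..T}. L2norm M (\<lambda>\<omega>. What SI (\<gamma> - 1/2) t \<omega> - Zbar SI \<gamma> \<epsilon> t \<omega>))
            \<longlongrightarrow> 0) (at_right 0)"
proof (rule tendstoI)
  fix \<eta> :: real assume eta: "0 < \<eta>"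
  note QW = assms(3) and g1 = assms(4) and g2 = assms(5) and T = assms(6)
  define C where "C = C_H (\<gamma> - 1/2)"
  define \<kappa> where "\<kappa> = \<bar>trace_op Q\<bar> / C\<^sup>2"
  have k0: "0 \<le> \<kappa>" unfolding \<kappa>_def by simp
  define \<eta>' where "\<eta>' = (\<eta>/2)\<^sup>2 / (\<kappa>+1)"
  have e'0: "0 < \<eta>'" unfolding \<eta>'_def using eta k0 by simp
  have keta: "\<kappa> * \<eta>' \<le> (\<eta>/2)\<^sup>2"
  proof -
    have "\<kappa> * \<eta>' = (\<kappa> / (\<kappa>+1)) * (\<eta>/2)\<^sup>2" unfolding \<eta>'_def by simp
    also have "\<dots> \<le> 1 * (\<eta>/2)\<^sup>2" using k0 by (intro mult_right_mono) auto
    finally show ?thesis by simp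
  qed
  have a1: "-1 < \<gamma> - 1" "\<gamma> - 1 < 1/2" using g1 g2 by auto
  have ev: "\<forall>\<^sub>F e in at_right 0. 0 < e \<and> (\<forall>t. \<bar>t\<bar> \<le> T \<longrightarrow>
           (\<integral>r. (phi (\<gamma>-1) e (t - r) - phi (\<gamma>-1) e (-r))\<^sup>2 \<partial>lborel) \<le> \<eta>')"
    using det_lim[OF a1 T e'0] .
  show "\<forall>\<^sub>F e in at_right 0. dist (SUP t\<in>{-T..T}. L2norm M (\<lambda>\<omega>. What SI (\<gamma> - 1/2) t \<omega> - Zbar SI \<gamma> e t \<omega>)) 0 < \<eta>"
    using ev
  proof eventually_elim
    case (elim e)
    define F where "F = (\<lambda>t. L2norm M (\<lambda>\<omega>. What SI (\<gamma> - 1/2) t \<omega> - Zbar SI \<gamma> e t \<omega>))"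
    have bnd: "0 \<le> F t \<and> F t \<le> \<eta>/2" if t: "t \<in> {-T..T}" for t
    proof
      show "0 \<le> F t" unfolding F_def L2norm_def by (simp add: integral_nonneg)
      define E where "E = (\<integral>r. (phi (\<gamma>-1) e (t - r) - phi (\<gamma>-1) e (-r))\<^sup>2 \<partial>lborel)"
      have E0: "0 \<le> E" unfolding E_def by (simp add: integral_nonneg)
      have Eb: "E \<le> \<eta>'" unfolding E_def using elim t by auto
      have Fe: "F t = sqrt (trace_op Q * (E / C\<^sup>2))"
        unfolding F_def E_def C_def using L2norm_eq[OF QW g1 g2, of e t] elim by simp
      have "trace_op Q * (E / C\<^sup>2) \<le> \<bar>trace_op Q\<bar> * (E / C\<^sup>2)"
        using E0 by (intro mult_right_mono) auto
      also have "\<dots> = \<kappa> * E" unfolding \<kappa>_def by simp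
      also have "\<dots> \<le> \<kappa> * \<eta>'" using k0 Eb by (intro mult_left_mono)
      also have "\<dots> \<le> (\<eta>/2)\<^sup>2" by (rule keta)
      finally have "F t \<le> sqrt ((\<eta>/2)\<^sup>2)" unfolding Fe by (rule real_sqrt_le_mono)
      thus "F t \<le> \<eta>/2" using eta by simp
    qed
    have ne: "{-T..T} \<noteq> {}" using T by simp
    have up: "(SUP t\<in>{-T..T}. F t) \<le> \<eta>/2" using bnd by (intro cSUP_least[OF ne]) auto
    have bdd: "bdd_above (F ` {-T..T})" using bnd by (intro bdd_aboveI2[of _ _ "\<eta>/2"]) auto
    have "0 \<in> {-T..T}" using T by simp
    hence lo: "0 \<le> (SUP t\<in>{-T..T}. F t)" using bnd bdd by (intro cSUP_upper2[of F _ 0]) auto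
    show ?case using up lo eta unfolding F_def[symmetric] by (simp add: dist_real_def)
  qed
qed

end
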